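(* Let $\kappa,\lambda$ be regular cardinals with $\aleph_0<\kappa$ and $\kappa^+<\lambda$, and let $S\subseteq\{\delta<\lambda:\operatorname{cf}\delta=\kappa\}$ be stationary in $\lambda$. Let $\langle c_\delta:\delta\in S\rangle$ be any sequence such that each $c_\delta\subseteq\delta$ is a club of $\delta$ of order type $\kappa$, and let $E'\subseteq\lambda$ be a club. Then there is a club $E\subseteq E'$ such that, setting $c'_\delta=c_\delta\cap E$ for $\delta\in S$: (1) each $c'_\delta$ is a closed subset of $\delta$; (2) for every club $E''\subseteq\lambda$ the set $\{\delta\in S: c'_\delta\subseteq E'',\ \sup c'_\delta=\delta,\ \operatorname{otp}c'_\delta=\kappa\}$ is stationary in $\lambda$.
   Context: $\operatorname{otp}$ denotes order type; a club of $\lambda$ is a closed unbounded subset of $\lambda$. *)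

theory Defs
  imports Main
begin

text \<open>Ordinals below a cardinal lambda are modelled as the elements of the field of a
  well-order r (a cardinal order, i.e. an initial ordinal).  (a,b) in r means a \<le> b.\<close>

definition olt :: "'a rel \<Rightarrow> 'a \<Rightarrow> 'a \<Rightarrow> bool" where
  "olt r a b \<longleftrightarrow> (a, b) \<in> r \<and> a \<noteq> b"

definition limit_point :: "'a rel \<Rightarrow> 'a set \<Rightarrow> 'a \<Rightarrow> bool" where
  "limit_point r C \<gamma> \<longleftrightarrow> \<gamma> \<in> Field r \<and> (\<exists>\<beta>\<in>C. olt r \<beta> \<gamma>) \<and>
     (\<forall>\<alpha>. olt r \<alpha> \<gamma> \<longrightarrow> (\<exists>\<beta>\<in>C. olt r \<alpha> \<beta> \<and> olt r \<beta> \<gamma>))"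

definition closed_below :: "'a rel \<Rightarrow> 'a \<Rightarrow> 'a set \<Rightarrow> bool" where
  "closed_below r \<delta> C \<longleftrightarrow> C \<subseteq> underS r \<delta> \<and>
     (\<forall>\<gamma>\<in>underS r \<delta>. limit_point r C \<gamma> \<longrightarrow> \<gamma> \<in> C)"

definition unbounded_below :: "'a rel \<Rightarrow> 'a \<Rightarrow> 'a set \<Rightarrow> bool" where
  "unbounded_below r \<delta> C \<longleftrightarrow> C \<subseteq> underS r \<delta> \<and>
     (\<forall>\<alpha>\<in>underS r \<delta>. \<exists>\<beta>\<in>C. (\<alpha>, \<beta>) \<in> r)"

definition club_below :: "'a rel \<Rightarrow> 'a \<Rightarrow> 'a set \<Rightarrow> bool" where
  "club_below r \<delta> C \<longleftrightarrow> closed_below r \<delta> C \<and> unbounded_below r \<delta> C"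

definition club :: "'a rel \<Rightarrow> 'a set \<Rightarrow> bool" where
  "club r C \<longleftrightarrow> C \<subseteq> Field r \<and>
     (\<forall>\<gamma>\<in>Field r. limit_point r C \<gamma> \<longrightarrow> \<gamma> \<in> C) \<and>
     (\<forall>\<alpha>\<in>Field r. \<exists>\<beta>\<in>C. (\<alpha>, \<beta>) \<in> r)"

definition stationary :: "'a rel \<Rightarrow> 'a set \<Rightarrow> bool" where
  "stationary r S \<longleftrightarrow> S \<subseteq> Field r \<and> (\<forall>C. club r C \<longrightarrow> S \<inter> C \<noteq> {})"

definition cof_eq :: "'a rel \<Rightarrow> 'a \<Rightarrow> 'b rel \<Rightarrow> bool" where
  "cof_eq r \<delta> k \<longleftrightarrow> (\<exists>K. unbounded_below r \<delta> K \<and> ordIso2 (card_of K) k) \<and>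
     (\<forall>K. unbounded_below r \<delta> K \<longrightarrow> ordLeq2 k (card_of K))"

definition sup_eq :: "'a rel \<Rightarrow> 'a set \<Rightarrow> 'a \<Rightarrow> bool" where
  "sup_eq r C \<delta> \<longleftrightarrow> \<delta> \<in> Field r \<and> (\<forall>\<beta>\<in>C. (\<beta>, \<delta>) \<in> r) \<and>
     (\<forall>\<gamma>\<in>Field r. (\<forall>\<beta>\<in>C. (\<beta>, \<gamma>) \<in> r) \<longrightarrow> (\<delta>, \<gamma>) \<in> r)"

definition otp_eq :: "'a rel \<Rightarrow> 'a set \<Rightarrow> 'b rel \<Rightarrow> bool" where
  "otp_eq r C k \<longleftrightarrow> ordIso2 (Restr r C) k"

end

theory Submission
  imports Defs
begin
unbundle cardinal_syntax


locale LL =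
  fixes r :: "'a rel"
  assumes CO: "Card_order r" and REG: "regularCard r" and UC: "natLeq <o r"
begin

lemma WO: "wo_rel r" using CO by (rule Card_order_wo_rel)

lemma INF: "infinite (Field r)"
proof -
  have "|Field r| =o r" using CO by (rule card_of_Field_ordIso)
  hence "natLeq \<le>o |Field r|" using UC ordLess_imp_ordLeq ordLeq_ordIso_trans ordIso_symmetric by blast
  thus ?thesis using infinite_iff_natLeq_ordLeq by blast
qed

lemma fld1: "olt r a b \<Longrightarrow> a \<in> Field r" unfolding olt_def by (auto intro: FieldI1)
lemma fld2: "olt r a b \<Longrightarrow> b \<in> Field r" unfolding olt_def by (auto intro: FieldI2)

lemma trans_: "(a,b) \<in> r \<Longrightarrow> (b,c) \<in> r \<Longrightarrow> (a,c) \<in> r"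
  using WO unfolding wo_rel_def well_order_on_def linear_order_on_def partial_order_on_def preorder_on_def trans_def by blast
lemma antisym_: "(a,b) \<in> r \<Longrightarrow> (b,a) \<in> r \<Longrightarrow> a = b"
  using WO unfolding wo_rel_def well_order_on_def linear_order_on_def partial_order_on_def antisym_def by blast
lemma refl_: "a \<in> Field r \<Longrightarrow> (a,a) \<in> r"
  using WO unfolding wo_rel_def well_order_on_def linear_order_on_def partial_order_on_def preorder_on_def refl_on_def by blast
lemma total_: "a \<in> Field r \<Longrightarrow> b \<in> Field r \<Longrightarrow> (a,b) \<in> r \<or> olt r b a"
  using WO unfolding olt_def wo_rel_def well_order_on_def linear_order_on_def total_on_def
  by (metis refl_)

lemma olt_trans: "olt r a b \<Longrightarrow> olt r b c \<Longrightarrow> olt r a c"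
  unfolding olt_def by (metis trans_ antisym_)
lemma olt_le_trans: "olt r a b \<Longrightarrow> (b,c) \<in> r \<Longrightarrow> olt r a c"
  unfolding olt_def by (metis trans_ antisym_)
lemma le_olt_trans: "(a,b) \<in> r \<Longrightarrow> olt r b c \<Longrightarrow> olt r a c"
  unfolding olt_def by (metis trans_ antisym_)
lemma olt_not_le: "olt r a b \<Longrightarrow> (b,a) \<in> r \<Longrightarrow> False"
  unfolding olt_def by (metis antisym_)
lemma olt_le: "olt r a b \<Longrightarrow> (a,b) \<in> r" unfolding olt_def by simp

lemma bound:
  assumes "A \<subseteq> Field r" "|A| <o r"
  shows "\<exists>b\<in>Field r. \<forall>a\<in>A. (a,b) \<in> r"
proof -
  have "\<not> cofinal A r"
  proof
    assume "cofinal A r"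
    hence "|A| =o r" using REG assms(1) unfolding regularCard_def by blast
    thus False using assms(2) not_ordLess_ordIso by blast
  qed
  then obtain b where b: "b \<in> Field r" "\<forall>a\<in>A. \<not>(b \<noteq> a \<and> (b,a) \<in> r)"
    unfolding cofinal_def by blast
  have "\<forall>a\<in>A. (a,b) \<in> r"
  proof
    fix a assume "a \<in> A"
    hence "a \<in> Field r" using assms(1) by blast
    thus "(a,b) \<in> r" using b `a \<in> A` total_[of a b] refl_ unfolding olt_def by blast
  qed
  thus ?thesis using b by blast
qed

lemma countable_less: "|range (f::nat\<Rightarrow>'a)| <o r"
proof -
  have "|range f| \<le>o |UNIV::nat set|" by (rule card_of_image)
  also have "|UNIV::nat set| =o natLeq" by (rule card_of_nat)
  finally show ?thesis using UC ordLeq_ordLess_trans by blast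
qed

lemma nomax: "a \<in> Field r \<Longrightarrow> \<exists>b. olt r a b"
  using infinite_Card_order_limit[OF CO INF] unfolding olt_def by blast

lemma lub:
  assumes f: "\<And>n. olt r (f n) (f (Suc n))" and u: "u \<in> Field r" "\<And>n. (f n, u) \<in> r"
  shows "\<exists>\<gamma>. \<gamma> \<in> Field r \<and> (\<gamma>,u) \<in> r \<and> (\<forall>n. olt r (f n) \<gamma>) \<and>
     (\<forall>\<alpha>. olt r \<alpha> \<gamma> \<longrightarrow> (\<exists>n. olt r \<alpha> (f n)))"
proof -
  define B where "B = {u'\<in>Field r. \<forall>n. (f n, u') \<in> r}"
  have BF: "B \<subseteq> Field r" and uB: "u \<in> B" using u B_def by auto
  define \<gamma> where "\<gamma> = wo_rel.minim r B"
  have gB: "\<gamma> \<in> B" unfolding \<gamma>_def using wo_rel.minim_in[OF WO BF] uB by blast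
  have gl: "\<And>b. b \<in> B \<Longrightarrow> (\<gamma>, b) \<in> r" unfolding \<gamma>_def using wo_rel.minim_least[OF WO BF] by blast
  have 1: "\<forall>n. olt r (f n) \<gamma>"
  proof
    fix n
    have "(f (Suc n), \<gamma>) \<in> r" using gB B_def by blast
    thus "olt r (f n) \<gamma>" using f olt_le_trans by blast
  qed
  have 2: "\<forall>\<alpha>. olt r \<alpha> \<gamma> \<longrightarrow> (\<exists>n. olt r \<alpha> (f n))"
  proof (intro allI impI)
    fix \<alpha> assume a: "olt r \<alpha> \<gamma>"
    have "\<alpha> \<notin> B" using gl a olt_not_le by blast
    then obtain n where "(f n, \<alpha>) \<notin> r" using B_def fld1[OF a] by blast
    thus "\<exists>n. olt r \<alpha> (f n)" using total_[of "f n" \<alpha>] fld1[OF a] fld1[OF f[of n]] by blast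
  qed
  show ?thesis using 1 2 gB gl uB B_def by blast
qed

end


context LL begin

lemma club_sub: "club r E \<Longrightarrow> E \<subseteq> Field r" unfolding club_def by blast

lemma club_above: assumes "club r E" "a \<in> Field r" shows "\<exists>e\<in>E. olt r a e"
proof -
  obtain b where b: "olt r a b" using nomax assms(2) by blast
  then obtain e where "e \<in> E" "(b,e) \<in> r" using assms(1) fld2[OF b] unfolding club_def by blast
  thus ?thesis using b olt_le_trans by blast
qed

lemma lp_mono: "limit_point r C \<gamma> \<Longrightarrow> C \<subseteq> D \<Longrightarrow> limit_point r D \<gamma>"
  unfolding limit_point_def by blast

lemma seqlim:
  assumes F: "\<F> \<noteq> {}" "\<forall>E\<in>\<F>. club r E" "|\<F>| <o r" and a: "\<alpha> \<in> Field r"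
  shows "\<exists>\<gamma>. olt r \<alpha> \<gamma> \<and> (\<forall>E\<in>\<F>. limit_point r E \<gamma>)"
proof -
  define e where "e = (\<lambda>E \<beta>. SOME x. x \<in> E \<and> olt r \<beta> x)"
  have e: "\<And>E \<beta>. E \<in> \<F> \<Longrightarrow> \<beta> \<in> Field r \<Longrightarrow> e E \<beta> \<in> E \<and> olt r \<beta> (e E \<beta>)"
  proof -
    fix E \<beta> assume "E \<in> \<F>" "\<beta> \<in> Field r"
    then obtain x where "x \<in> E \<and> olt r \<beta> x" using club_above[of E \<beta>] F(2) by blast
    thus "e E \<beta> \<in> E \<and> olt r \<beta> (e E \<beta>)" unfolding e_def by (rule someI[where P="\<lambda>x. x \<in> E \<and> olt r \<beta> x"])
  qed
  define nx where "nx = (\<lambda>\<beta>. SOME b. b \<in> Field r \<and> (\<forall>E\<in>\<F>. (e E \<beta>, b) \<in> r))"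
  have nx: "\<And>\<beta>. \<beta> \<in> Field r \<Longrightarrow> nx \<beta> \<in> Field r \<and> (\<forall>E\<in>\<F>. (e E \<beta>, nx \<beta>) \<in> r)"
  proof -
    fix \<beta> assume b: "\<beta> \<in> Field r"
    have s1: "(\<lambda>E. e E \<beta>) ` \<F> \<subseteq> Field r"
    proof
      fix x assume "x \<in> (\<lambda>E. e E \<beta>) ` \<F>"
      then obtain E where "E \<in> \<F>" "x = e E \<beta>" by blast
      thus "x \<in> Field r" using e[of E \<beta>] b fld2 by blast
    qed
    have s2: "|(\<lambda>E. e E \<beta>) ` \<F>| <o r" by (rule ordLeq_ordLess_trans[OF card_of_image F(3)])
    obtain x where x: "x \<in> Field r" "\<forall>a\<in>(\<lambda>E. e E \<beta>) ` \<F>. (a,x) \<in> r" using bound[OF s1 s2] by blast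
    hence "x \<in> Field r \<and> (\<forall>E\<in>\<F>. (e E \<beta>, x) \<in> r)" by blast
    thus "nx \<beta> \<in> Field r \<and> (\<forall>E\<in>\<F>. (e E \<beta>, nx \<beta>) \<in> r)" unfolding nx_def by (rule someI[where P="\<lambda>b. b \<in> Field r \<and> (\<forall>E\<in>\<F>. (e E \<beta>, b) \<in> r)"])
  qed
  obtain E0 where E0: "E0 \<in> \<F>" using F by blast
  define f where "f = rec_nat \<alpha> (\<lambda>_ \<beta>. nx \<beta>)"
  have f0: "f 0 = \<alpha>" and fS: "\<And>n. f (Suc n) = nx (f n)" unfolding f_def by auto
  have fF: "\<And>n. f n \<in> Field r"
  proof -
    fix n show "f n \<in> Field r" by (induction n) (simp_all add: f0 fS a nx)
  qed
  have finc: "\<And>n. olt r (f n) (f (Suc n))"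
  proof -
    fix n
    have 1: "olt r (f n) (e E0 (f n))" using e[OF E0 fF] by blast
    have 2: "(e E0 (f n), f (Suc n)) \<in> r" using nx[OF fF, of n] E0 fS by simp
    show "olt r (f n) (f (Suc n))" by (rule olt_le_trans[OF 1 2])
  qed
  have rF: "range f \<subseteq> Field r" using fF by blast
  obtain u where u: "u \<in> Field r" "\<forall>a\<in>range f. (a, u) \<in> r"
    using bound[OF rF countable_less[of f]] by (elim bexE) 
  have u2: "\<And>n. (f n, u) \<in> r" using u(2) by simp
  obtain \<gamma> where g: "\<gamma> \<in> Field r" "\<forall>n. olt r (f n) \<gamma>" "\<forall>\<alpha>. olt r \<alpha> \<gamma> \<longrightarrow> (\<exists>n. olt r \<alpha> (f n))"
    using lub[of f u, OF finc u(1) u2] by (elim exE conjE)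
  have "\<forall>E\<in>\<F>. limit_point r E \<gamma>"
  proof
    fix E assume E: "E \<in> \<F>"
    have ub: "\<And>n. olt r (e E (f n)) \<gamma>"
    proof -
      fix n
      have 2: "(e E (f n), f (Suc n)) \<in> r" using nx[OF fF, of n] E fS by simp
      show "olt r (e E (f n)) \<gamma>" using le_olt_trans[OF 2] g(2) by blast
    qed
    have "\<exists>\<beta>\<in>E. olt r \<beta> \<gamma>" using ub e[OF E fF] by blast
    moreover have "\<forall>\<alpha>'. olt r \<alpha>' \<gamma> \<longrightarrow> (\<exists>\<beta>\<in>E. olt r \<alpha>' \<beta> \<and> olt r \<beta> \<gamma>)"
    proof (intro allI impI)
      fix \<alpha>' assume "olt r \<alpha>' \<gamma>"
      then obtain n where "olt r \<alpha>' (f n)" using g(3) by blast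
      thus "\<exists>\<beta>\<in>E. olt r \<alpha>' \<beta> \<and> olt r \<beta> \<gamma>" using ub[of n] e[OF E fF, of n] olt_trans by blast
    qed
    ultimately show "limit_point r E \<gamma>" unfolding limit_point_def using g(1) by blast
  qed
  moreover have "olt r (f 0) \<gamma>" using g(2) by blast
  hence "olt r \<alpha> \<gamma>" using f0 by simp
  ultimately show ?thesis by blast
qed

lemma club_Inter:
  assumes F: "\<F> \<noteq> {}" "\<forall>E\<in>\<F>. club r E" "|\<F>| <o r"
  shows "club r (\<Inter>\<F>)"
proof -
  have "\<Inter>\<F> \<subseteq> Field r" using F club_sub by blast
  moreover have "\<forall>\<gamma>\<in>Field r. limit_point r (\<Inter>\<F>) \<gamma> \<longrightarrow> \<gamma> \<in> \<Inter>\<F>"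
  proof (intro ballI impI)
    fix \<gamma> assume "\<gamma> \<in> Field r" "limit_point r (\<Inter>\<F>) \<gamma>"
    show "\<gamma> \<in> \<Inter>\<F>"
    proof
      fix E assume E: "E \<in> \<F>"
      have "\<Inter>\<F> \<subseteq> E" using E by blast
      hence "limit_point r E \<gamma>" using lp_mono \<open>limit_point r (\<Inter>\<F>) \<gamma>\<close> by blast
      thus "\<gamma> \<in> E" using F(2) E \<open>\<gamma> \<in> Field r\<close> unfolding club_def by blast
    qed
  qed
  moreover have "\<forall>\<alpha>\<in>Field r. \<exists>\<beta>\<in>\<Inter>\<F>. (\<alpha>, \<beta>) \<in> r"
  proof
    fix \<alpha> assume "\<alpha> \<in> Field r"
    then obtain \<gamma> where g: "olt r \<alpha> \<gamma>" "\<forall>E\<in>\<F>. limit_point r E \<gamma>" using seqlim F by blast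
    have "\<gamma> \<in> \<Inter>\<F>"
    proof
      fix E assume E: "E \<in> \<F>"
      thus "\<gamma> \<in> E" using F(2) g(2) fld2[OF g(1)] unfolding club_def by blast
    qed
    thus "\<exists>\<beta>\<in>\<Inter>\<F>. (\<alpha>, \<beta>) \<in> r" using g olt_le by blast
  qed
  ultimately show ?thesis unfolding club_def by blast
qed

lemma finite_less: "finite A \<Longrightarrow> |A| <o r"
proof -
  assume "finite A"
  hence "|A| <o |Field r|" using INF finite_ordLess_infinite[of "|A|" "|Field r|"]
    by (simp add: card_of_well_order_on Field_card_of)
  thus "|A| <o r" using card_of_Field_ordIso[OF CO] ordLess_ordIso_trans by blast
qed

definition acc :: "'a set \<Rightarrow> 'a set" where
  "acc E = {\<gamma>\<in>Field r. limit_point r E \<gamma>}"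

lemma club_acc: assumes "club r E" shows "club r (acc E)"
proof -
  have "acc E \<subseteq> Field r" unfolding acc_def by blast
  moreover have "\<forall>\<gamma>\<in>Field r. limit_point r (acc E) \<gamma> \<longrightarrow> \<gamma> \<in> acc E"
  proof (intro ballI impI)
    fix \<gamma> assume g: "\<gamma> \<in> Field r" "limit_point r (acc E) \<gamma>"
    have "limit_point r E \<gamma>" unfolding limit_point_def
    proof (intro conjI allI impI)
      show "\<gamma> \<in> Field r" by fact
      obtain b where b: "b \<in> acc E" "olt r b \<gamma>" using g(2) unfolding limit_point_def by blast
      then obtain b' where "b' \<in> E" "olt r b' b" using b unfolding acc_def limit_point_def by blast
      thus "\<exists>\<beta>\<in>E. olt r \<beta> \<gamma>" using b olt_trans by blast
      fix \<alpha> assume "olt r \<alpha> \<gamma>"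
      then obtain b where b: "b \<in> acc E" "olt r \<alpha> b" "olt r b \<gamma>" using g(2) unfolding limit_point_def by blast
      then obtain b' where "b' \<in> E" "olt r \<alpha> b'" "olt r b' b" using b unfolding acc_def limit_point_def by blast
      thus "\<exists>\<beta>\<in>E. olt r \<alpha> \<beta> \<and> olt r \<beta> \<gamma>" using b olt_trans by blast
    qed
    thus "\<gamma> \<in> acc E" using g unfolding acc_def by blast
  qed
  moreover have "\<forall>\<alpha>\<in>Field r. \<exists>\<beta>\<in>acc E. (\<alpha>, \<beta>) \<in> r"
  proof
    fix \<alpha> assume "\<alpha> \<in> Field r"
    then obtain \<gamma> where g: "olt r \<alpha> \<gamma>" "limit_point r E \<gamma>" using seqlim[of "{E}" \<alpha>] assms finite_less[of "{E}"] by blast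
    thus "\<exists>\<beta>\<in>acc E. (\<alpha>, \<beta>) \<in> r" using olt_le fld2 unfolding acc_def by blast
  qed
  ultimately show ?thesis unfolding club_def by blast
qed

end


lemma sub_ordLeq:
  assumes W: "Well_order W" and A: "A \<subseteq> Field W"
  shows "Restr W A \<le>o W"
proof (rule ccontr)
  assume "\<not> Restr W A \<le>o W"
  hence "W <o Restr W A" using not_ordLeq_iff_ordLess[OF W Well_order_Restr[OF W]] by blast
  then obtain a where a: "a \<in> Field (Restr W A)" "W =o Restr (Restr W A) (underS (Restr W A) a)"
    using ordLess_iff_ordIso_Restr[OF Well_order_Restr[OF W] W] by blast
  define R' where "R' = Restr (Restr W A) (underS (Restr W A) a)"
  obtain f where f: "iso W R' f" using a(2) unfolding R'_def ordIso_def by blast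
  have R'W: "\<And>x y. (x,y) \<in> R' \<Longrightarrow> (x,y) \<in> W" unfolding R'_def by blast
  have FR': "\<And>x. x \<in> Field R' \<Longrightarrow> (x,a) \<in> W \<and> x \<noteq> a"
    unfolding R'_def Field_def underS_def by blast
  have comp: "\<And>x y. (x,y) \<in> W \<Longrightarrow> (f x, f y) \<in> W"
    using embed_compat[of W R' f] f R'W unfolding iso_def compat_def by blast
  have bij: "bij_betw f (Field W) (Field R')" using f unfolding iso_def by blast
  have fF: "\<And>x. x \<in> Field W \<Longrightarrow> f x \<in> Field R'" using bij unfolding bij_betw_def by blast
  have inj: "inj_on f (Field W)" using bij unfolding bij_betw_def by blast
  have wo: "wo_rel W" using W unfolding wo_rel_def .
  have strict: "\<And>x y. (x,y) \<in> W \<Longrightarrow> x \<noteq> y \<Longrightarrow> f x \<noteq> f y"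
  proof -
    fix x y assume "(x,y) \<in> W" "x \<noteq> y"
    moreover have "x \<in> Field W" "y \<in> Field W" using \<open>(x,y) \<in> W\<close> by (auto intro: FieldI1 FieldI2)
    ultimately show "f x \<noteq> f y" using inj unfolding inj_on_def by blast
  qed
  have key: "\<And>x. x \<in> Field W \<longrightarrow> (x, f x) \<in> W"
  proof -
    fix x show "x \<in> Field W \<longrightarrow> (x, f x) \<in> W"
    proof (induction x rule: wo_rel.well_order_induct[OF wo])
      case (1 x)
      show ?case
      proof
        assume xF: "x \<in> Field W"
        have fxW: "f x \<in> Field W" using fF[OF xF] unfolding R'_def Field_def by blast
        show "(x, f x) \<in> W"
        proof (rule ccontr)
          assume nx: "(x, f x) \<notin> W"
          have "(f x, x) \<in> W" using wo_rel.TOTALS[OF wo] xF fxW nx by blast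
          moreover have "f x \<noteq> x" using nx wo_rel.REFL[OF wo] xF unfolding refl_on_def by metis
          ultimately have lt: "(f x, x) \<in> W" "f x \<noteq> x" by blast+
          have ih: "(f x, f (f x)) \<in> W" using spec[OF 1, of "f x"] lt fxW by blast
          have "(f (f x), f x) \<in> W" using comp[OF lt(1)] .
          moreover have "f (f x) \<noteq> f x" using strict[OF lt] .
          ultimately show False using ih wo_rel.ANTISYM[OF wo] unfolding antisym_def by blast
        qed
      qed
    qed
  qed
  have aF: "a \<in> Field W" using a(1) unfolding Field_def by blast
  have "(a, f a) \<in> W" using key aF by blast
  moreover have "(f a, a) \<in> W \<and> f a \<noteq> a" using FR'[OF fF[OF aF]] .
  ultimately show False using wo_rel.ANTISYM[OF wo] unfolding antisym_def by blast
qed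



locale LK = LL r for r :: "'a rel" +
  fixes k :: "'b rel"
  assumes KI: "natLeq <o k"
begin

lemma underS_iff: "x \<in> underS r \<delta> \<longleftrightarrow> olt r x \<delta>"
  unfolding underS_def olt_def by blast

lemma ctbl_not_unb:
  assumes cof: "cof_eq r \<delta> k" shows "\<not> unbounded_below r \<delta> (range (f::nat\<Rightarrow>'a))"
proof
  assume "unbounded_below r \<delta> (range f)"
  hence 1: "k \<le>o |range f|" using cof unfolding cof_eq_def by blast
  have "|range f| \<le>o |UNIV::nat set|" by (rule card_of_image)
  also have "|UNIV::nat set| =o natLeq" by (rule card_of_nat)
  finally have "|range f| \<le>o natLeq" .
  hence "k \<le>o natLeq" using 1 ordLeq_transitive by blast
  thus False using KI not_ordLess_ordLeq by blast
qed

lemma nomax_below: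
  assumes cof: "cof_eq r \<delta> k" and K: "unbounded_below r \<delta> K" and a: "olt r \<alpha> \<delta>"
  shows "\<exists>\<beta>\<in>K. olt r \<alpha> \<beta>"
proof (rule ccontr)
  assume no: "\<not> (\<exists>\<beta>\<in>K. olt r \<alpha> \<beta>)"
  have "unbounded_below r \<delta> (range (\<lambda>_::nat. \<alpha>))"
    unfolding unbounded_below_def
  proof (intro conjI ballI)
    show "range (\<lambda>_::nat. \<alpha>) \<subseteq> underS r \<delta>" using a underS_iff by auto
    fix \<alpha>' assume a': "\<alpha>' \<in> underS r \<delta>"
    then obtain \<beta> where b: "\<beta> \<in> K" "(\<alpha>', \<beta>) \<in> r" using K unfolding unbounded_below_def by blast
    have "\<beta> \<in> Field r" using b(1) K fld1 underS_iff unfolding unbounded_below_def by blast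
    hence "(\<beta>, \<alpha>) \<in> r" using total_[of \<beta> \<alpha>] fld1[OF a] no b(1) by blast
    hence "(\<alpha>', \<alpha>) \<in> r" using trans_ b(2) by blast
    thus "\<exists>\<beta>\<in>range (\<lambda>_::nat. \<alpha>). (\<alpha>', \<beta>) \<in> r" by blast
  qed
  thus False using ctbl_not_unb[OF cof] by blast
qed

lemma sup_ok:
  assumes cof: "cof_eq r \<delta> k" and K: "unbounded_below r \<delta> K" and d: "\<delta> \<in> Field r"
  shows "sup_eq r K \<delta>"
  unfolding sup_eq_def
proof (intro conjI ballI impI)
  show "\<delta> \<in> Field r" by fact
  fix \<beta> assume "\<beta> \<in> K"
  thus "(\<beta>, \<delta>) \<in> r" using K unfolding unbounded_below_def underS_def by blast
next
  fix \<gamma> assume g: "\<gamma> \<in> Field r" "\<forall>\<beta>\<in>K. (\<beta>, \<gamma>) \<in> r"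
  show "(\<delta>, \<gamma>) \<in> r"
  proof (rule ccontr)
    assume "(\<delta>, \<gamma>) \<notin> r"
    hence "olt r \<gamma> \<delta>" using total_[OF d g(1)] by blast
    then obtain \<beta> where "\<beta> \<in> K" "olt r \<gamma> \<beta>" using nomax_below[OF cof K] by blast
    thus False using g(2) olt_not_le by blast
  qed
qed

lemma otp_ok:
  assumes cof: "cof_eq r \<delta> k" and K: "unbounded_below r \<delta> K" and KC: "K \<subseteq> C"
    and CF: "C \<subseteq> Field r" and C: "otp_eq r C k"
  shows "otp_eq r K k"
proof -
  have W: "Well_order r" using WO unfolding wo_rel_def .
  have WC: "Well_order (Restr r C)" by (rule Well_order_Restr[OF W])
  have FC: "Field (Restr r C) = C" using Refl_Field_Restr2[OF wo_rel.REFL[OF WO] CF] .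
  have "Restr (Restr r C) K \<le>o Restr r C" using sub_ordLeq[OF WC] KC FC by blast
  moreover have "Restr (Restr r C) K = Restr r K" using KC by blast
  ultimately have 1: "Restr r K \<le>o Restr r C" by simp
  have 2: "Restr r C =o k" using C unfolding otp_eq_def .
  have 3: "k \<le>o |K|" using cof K unfolding cof_eq_def by blast
  have KF: "K \<subseteq> Field r" using KC CF by blast
  have 4: "|K| \<le>o Restr r K" by (rule card_of_least[OF well_order_on_Restr[OF W KF]])
  have a: "Restr r K \<le>o k" using ordLeq_ordIso_trans[OF 1 2] .
  have b: "k \<le>o Restr r K" using ordLeq_transitive[OF 3 4] .
  show ?thesis unfolding otp_eq_def using ordIso_iff_ordLeq a b by blast
qed

end


context LK begin

lemma unb_int:
  assumes cof: "cof_eq r \<delta> k" and C: "club_below r \<delta> C" and E: "club r E"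
    and lp: "limit_point r E \<delta>"
  shows "unbounded_below r \<delta> (C \<inter> E)"
  unfolding unbounded_below_def
proof (intro conjI ballI)
  have Cu: "unbounded_below r \<delta> C" and Cc: "closed_below r \<delta> C" using C unfolding club_below_def by blast+
  have CS: "C \<subseteq> underS r \<delta>" using Cu unfolding unbounded_below_def by blast
  show "C \<inter> E \<subseteq> underS r \<delta>" using CS by blast
  fix \<alpha> assume a: "\<alpha> \<in> underS r \<delta>"
  define h where "h = (\<lambda>\<beta>. SOME c. c \<in> C \<and> olt r \<beta> c)"
  define g where "g = (\<lambda>\<beta>. SOME e. e \<in> E \<and> olt r \<beta> e \<and> olt r e \<delta>)"
  have h: "\<And>\<beta>. olt r \<beta> \<delta> \<Longrightarrow> h \<beta> \<in> C \<and> olt r \<beta> (h \<beta>) \<and> olt r (h \<beta>) \<delta>"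
  proof -
    fix \<beta> assume b: "olt r \<beta> \<delta>"
    obtain c where "c \<in> C" "olt r \<beta> c" using nomax_below[OF cof Cu b] by blast
    hence "c \<in> C \<and> olt r \<beta> c" by blast
    hence 1: "h \<beta> \<in> C \<and> olt r \<beta> (h \<beta>)" unfolding h_def by (rule someI[where P="\<lambda>c. c \<in> C \<and> olt r \<beta> c"])
    hence "olt r (h \<beta>) \<delta>" using CS underS_iff by blast
    thus "h \<beta> \<in> C \<and> olt r \<beta> (h \<beta>) \<and> olt r (h \<beta>) \<delta>" using 1 by blast
  qed
  have g: "\<And>\<beta>. olt r \<beta> \<delta> \<Longrightarrow> g \<beta> \<in> E \<and> olt r \<beta> (g \<beta>) \<and> olt r (g \<beta>) \<delta>"
  proof -
    fix \<beta> assume b: "olt r \<beta> \<delta>"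
    obtain e where "e \<in> E" "olt r \<beta> e" "olt r e \<delta>" using lp b unfolding limit_point_def by blast
    hence "e \<in> E \<and> olt r \<beta> e \<and> olt r e \<delta>" by blast
    thus "g \<beta> \<in> E \<and> olt r \<beta> (g \<beta>) \<and> olt r (g \<beta>) \<delta>" unfolding g_def
      by (rule someI[where P="\<lambda>e. e \<in> E \<and> olt r \<beta> e \<and> olt r e \<delta>"])
  qed
  define f where "f = rec_nat \<alpha> (\<lambda>_ \<beta>. g (h \<beta>))"
  have f0: "f 0 = \<alpha>" and fS: "\<And>n. f (Suc n) = g (h (f n))" unfolding f_def by auto
  have fd: "\<And>n. olt r (f n) \<delta>"
  proof -
    fix n show "olt r (f n) \<delta>"
    proof (induction n)
      case 0 show ?case using a underS_iff f0 by simp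
    next
      case (Suc n)
      have "olt r (h (f n)) \<delta>" using h[OF Suc] by blast
      thus ?case using g fS by simp
    qed
  qed
  have hf: "\<And>n. h (f n) \<in> C \<and> olt r (f n) (h (f n)) \<and> olt r (h (f n)) (f (Suc n)) \<and> f (Suc n) \<in> E"
  proof -
    fix n
    have 1: "h (f n) \<in> C \<and> olt r (f n) (h (f n)) \<and> olt r (h (f n)) \<delta>" using h[OF fd[of n]] .
    have 2: "g (h (f n)) \<in> E \<and> olt r (h (f n)) (g (h (f n)))" using g 1 by blast
    show "h (f n) \<in> C \<and> olt r (f n) (h (f n)) \<and> olt r (h (f n)) (f (Suc n)) \<and> f (Suc n) \<in> E"
      using 1 2 fS by simp
  qed
  have finc: "\<And>n. olt r (f n) (f (Suc n))"
  proof -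
    fix n show "olt r (f n) (f (Suc n))" using hf[of n] olt_trans by blast
  qed
  have "\<not> unbounded_below r \<delta> (range f)" by (rule ctbl_not_unb[OF cof])
  moreover have "range f \<subseteq> underS r \<delta>" using fd underS_iff by blast
  ultimately obtain u where u: "u \<in> underS r \<delta>" "\<forall>\<beta>\<in>range f. (u, \<beta>) \<notin> r"
    unfolding unbounded_below_def by blast
  have uF: "u \<in> Field r" using u(1) underS_iff fld1 by blast
  have u2: "\<And>n. (f n, u) \<in> r"
  proof -
    fix n
    have "(u, f n) \<notin> r" using u(2) by simp
    thus "(f n, u) \<in> r" using total_[OF uF fld1[OF fd[of n]]] olt_le by blast
  qed
  obtain \<gamma> where gm: "\<gamma> \<in> Field r" "(\<gamma>, u) \<in> r" "\<forall>n. olt r (f n) \<gamma>" "\<forall>\<alpha>. olt r \<alpha> \<gamma> \<longrightarrow> (\<exists>n. olt r \<alpha> (f n))"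
    using lub[of f u, OF finc uF u2] by (elim exE conjE)
  have gd: "olt r \<gamma> \<delta>" using le_olt_trans[OF gm(2)] u(1) underS_iff by blast
  have lpC: "limit_point r C \<gamma>" unfolding limit_point_def
  proof (intro conjI allI impI)
    show "\<gamma> \<in> Field r" by fact
    have "olt r (h (f 0)) \<gamma>" using hf[of 0] gm(3) olt_trans by blast
    thus "\<exists>\<beta>\<in>C. olt r \<beta> \<gamma>" using hf[of 0] by blast
    fix \<alpha>' assume "olt r \<alpha>' \<gamma>"
    then obtain n where n: "olt r \<alpha>' (f n)" using gm(4) by blast
    have "olt r (h (f n)) \<gamma>" using hf[of n] gm(3) olt_trans by blast
    moreover have "olt r \<alpha>' (h (f n))" using hf[of n] n olt_trans by blast
    ultimately show "\<exists>\<beta>\<in>C. olt r \<alpha>' \<beta> \<and> olt r \<beta> \<gamma>" using hf[of n] by blast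
  qed
  have lpE: "limit_point r E \<gamma>" unfolding limit_point_def
  proof (intro conjI allI impI)
    show "\<gamma> \<in> Field r" by fact
    have "olt r (f 1) \<gamma>" using gm(3) by blast
    thus "\<exists>\<beta>\<in>E. olt r \<beta> \<gamma>" using hf[of 0] by auto
    fix \<alpha>' assume "olt r \<alpha>' \<gamma>"
    then obtain n where n: "olt r \<alpha>' (f n)" using gm(4) by blast
    have "olt r \<alpha>' (f (Suc n))" using n finc[of n] olt_trans by blast
    thus "\<exists>\<beta>\<in>E. olt r \<alpha>' \<beta> \<and> olt r \<beta> \<gamma>" using hf[of n] gm(3) by blast
  qed
  have "\<gamma> \<in> C" using Cc gd lpC underS_iff unfolding closed_below_def by blast
  moreover have "\<gamma> \<in> E" using E gm(1) lpE unfolding club_def by blast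
  moreover have "(\<alpha>, \<gamma>) \<in> r" using gm(3) f0 olt_le by metis
  ultimately show "\<exists>\<beta>\<in>C \<inter> E. (\<alpha>, \<beta>) \<in> r" by blast
qed

end


context LK begin

lemma club_fam:
  assumes s: "Card_order s" "s <o r" and J: "J \<subseteq> Field s" and H: "\<forall>j\<in>J. club r (H j)"
    and E': "club r E'"
  shows "club r (\<Inter> (insert E' (H ` J)))"
proof (rule club_Inter)
  show "insert E' (H ` J) \<noteq> {}" by blast
  show "\<forall>E\<in>insert E' (H ` J). club r E" using H E' by blast
  have 1: "|H ` J| \<le>o |J|" by (rule card_of_image)
  have 2: "|J| \<le>o |Field s|" by (rule card_of_mono1[OF J])
  have 3: "|Field s| =o s" by (rule card_of_Field_ordIso[OF s(1)])
  have "|H ` J| <o r" using ordLeq_ordLess_trans[OF ordLeq_transitive[OF 1 ordLeq_ordIso_trans[OF 2 3]] s(2)] .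
  moreover have "|{E'}| <o r" by (rule finite_less) simp
  ultimately have "|{E'} \<union> H ` J| <o r" using card_of_Un_ordLess_infinite_Field[OF INF CO] by blast
  thus "|insert E' (H ` J)| <o r" by simp
qed

end

theorem mainTheorem3:
  fixes r :: "'a rel" and k :: "'b rel"
    and S :: "'a set" and c :: "'a \<Rightarrow> 'a set" and E' :: "'a set"
  assumes lam: "Card_order r" "regularCard r"
    and kap: "Card_order k" "regularCard k"
    and aleph0: "ordLess2 natLeq k"
    and succ: "ordLess2 (cardSuc k) r"
    and S_sub: "S \<subseteq> {\<delta>\<in>Field r. cof_eq r \<delta> k}"
    and S_stat: "stationary r S"
    and c_club: "\<forall>\<delta>\<in>S. club_below r \<delta> (c \<delta>) \<and> otp_eq r (c \<delta>) k"
    and E'_club: "club r E'"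
  shows "\<exists>E. club r E \<and> E \<subseteq> E' \<and>
           (\<forall>\<delta>\<in>S. closed_below r \<delta> (c \<delta> \<inter> E)) \<and>
           (\<forall>E''. club r E'' \<longrightarrow>
              stationary r {\<delta>\<in>S. c \<delta> \<inter> E \<subseteq> E'' \<and> sup_eq r (c \<delta> \<inter> E) \<delta>
                                 \<and> otp_eq r (c \<delta> \<inter> E) k})"
proof (rule ccontr)
  assume NOT: "\<not> ?thesis"
  have ks: "k <o cardSuc k" by (rule cardSuc_greater[OF kap(1)])
  have UC: "natLeq <o r" using ordLess_transitive[OF aleph0 ordLess_transitive[OF ks succ]] .
  interpret LK r k using lam UC aleph0 by unfold_locales auto
  have cF: "\<And>\<delta>. \<delta> \<in> S \<Longrightarrow> c \<delta> \<subseteq> Field r"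
    using c_club underS_iff fld1 unfolding club_below_def unbounded_below_def by blast
  have closed: "\<And>\<delta> E. \<delta> \<in> S \<Longrightarrow> club r E \<Longrightarrow> closed_below r \<delta> (c \<delta> \<inter> E)"
  proof -
    fix \<delta> E assume d: "\<delta> \<in> S" and E: "club r E"
    have cc: "closed_below r \<delta> (c \<delta>)" using c_club d unfolding club_below_def by blast
    show "closed_below r \<delta> (c \<delta> \<inter> E)" unfolding closed_below_def
    proof (intro conjI ballI impI)
      show "c \<delta> \<inter> E \<subseteq> underS r \<delta>" using cc unfolding closed_below_def by blast
      fix \<gamma> assume g: "\<gamma> \<in> underS r \<delta>" "limit_point r (c \<delta> \<inter> E) \<gamma>"
      have "limit_point r (c \<delta>) \<gamma>" using lp_mono[OF g(2)] by blast
      hence "\<gamma> \<in> c \<delta>" using cc g(1) unfolding closed_below_def by blast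
      moreover have "limit_point r E \<gamma>" using lp_mono[OF g(2)] by blast
      hence "\<gamma> \<in> E" using E g(1) underS_iff fld1 unfolding club_def by blast
      ultimately show "\<gamma> \<in> c \<delta> \<inter> E" by blast
    qed
  qed
  have NE: "\<And>E. club r E \<Longrightarrow> E \<subseteq> E' \<Longrightarrow>
      \<exists>D. club r D \<and> D \<subseteq> E \<and> D \<subseteq> acc E \<and> (\<forall>\<delta>\<in>S \<inter> D. \<not> (c \<delta> \<inter> E \<subseteq> D))"
  proof -
    fix E assume E: "club r E" "E \<subseteq> E'"
    obtain E'' where E'': "club r E''" "\<not> stationary r {\<delta>\<in>S. c \<delta> \<inter> E \<subseteq> E'' \<and> sup_eq r (c \<delta> \<inter> E) \<delta>
                                 \<and> otp_eq r (c \<delta> \<inter> E) k}"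
      using NOT E closed by blast
    then obtain D0 where D0: "club r D0" "{\<delta>\<in>S. c \<delta> \<inter> E \<subseteq> E'' \<and> sup_eq r (c \<delta> \<inter> E) \<delta>
                                 \<and> otp_eq r (c \<delta> \<inter> E) k} \<inter> D0 = {}"
      using S_sub unfolding stationary_def by blast
    define D where "D = \<Inter> {E, acc E, E'', D0}"
    have "club r D" unfolding D_def
    proof (rule club_Inter)
      show "{E, acc E, E'', D0} \<noteq> {}" by blast
      show "\<forall>X\<in>{E, acc E, E'', D0}. club r X" using E(1) club_acc[OF E(1)] E''(1) D0(1) by blast
      show "|{E, acc E, E'', D0}| <o r" by (rule finite_less) simp
    qed
    moreover have "D \<subseteq> E" "D \<subseteq> acc E" unfolding D_def by blast+
    moreover have "\<forall>\<delta>\<in>S \<inter> D. \<not> (c \<delta> \<inter> E \<subseteq> D)"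
    proof (intro ballI notI)
      fix \<delta> assume d: "\<delta> \<in> S \<inter> D" and sub: "c \<delta> \<inter> E \<subseteq> D"
      have dS: "\<delta> \<in> S" using d by blast
      have cof: "cof_eq r \<delta> k" and dF: "\<delta> \<in> Field r" using S_sub dS by blast+
      have lp: "limit_point r E \<delta>" using d unfolding D_def acc_def by blast
      have cc: "club_below r \<delta> (c \<delta>)" "otp_eq r (c \<delta>) k" using c_club dS by blast+
      have unb: "unbounded_below r \<delta> (c \<delta> \<inter> E)" by (rule unb_int[OF cof cc(1) E(1) lp])
      have 1: "sup_eq r (c \<delta> \<inter> E) \<delta>" by (rule sup_ok[OF cof unb dF])
      have 2: "otp_eq r (c \<delta> \<inter> E) k" by (rule otp_ok[OF cof unb _ cF[OF dS] cc(2)]) blast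
      have 3: "c \<delta> \<inter> E \<subseteq> E''" using sub unfolding D_def by blast
      have "\<delta> \<in> D0" using d unfolding D_def by blast
      thus False using D0(2) dS 1 2 3 by blast
    qed
    ultimately show "\<exists>D. club r D \<and> D \<subseteq> E \<and> D \<subseteq> acc E \<and> (\<forall>\<delta>\<in>S \<inter> D. \<not> (c \<delta> \<inter> E \<subseteq> D))"
      by blast
  qed
  define G where "G = (\<lambda>E. if club r E \<and> E \<subseteq> E' then
     (SOME D. club r D \<and> D \<subseteq> E \<and> D \<subseteq> acc E \<and> (\<forall>\<delta>\<in>S \<inter> D. \<not> (c \<delta> \<inter> E \<subseteq> D))) else E')"
  have G1: "\<And>E. club r E \<Longrightarrow> E \<subseteq> E' \<Longrightarrow>
      club r (G E) \<and> G E \<subseteq> E \<and> G E \<subseteq> acc E \<and> (\<forall>\<delta>\<in>S \<inter> G E. \<not> (c \<delta> \<inter> E \<subseteq> G E))"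
  proof -
    fix E assume E: "club r E" "E \<subseteq> E'"
    obtain D where "club r D \<and> D \<subseteq> E \<and> D \<subseteq> acc E \<and> (\<forall>\<delta>\<in>S \<inter> D. \<not> (c \<delta> \<inter> E \<subseteq> D))"
      using NE[OF E] by blast
    hence "club r (SOME D. club r D \<and> D \<subseteq> E \<and> D \<subseteq> acc E \<and> (\<forall>\<delta>\<in>S \<inter> D. \<not> (c \<delta> \<inter> E \<subseteq> D)))
      \<and> (SOME D. club r D \<and> D \<subseteq> E \<and> D \<subseteq> acc E \<and> (\<forall>\<delta>\<in>S \<inter> D. \<not> (c \<delta> \<inter> E \<subseteq> D))) \<subseteq> E
      \<and> (SOME D. club r D \<and> D \<subseteq> E \<and> D \<subseteq> acc E \<and> (\<forall>\<delta>\<in>S \<inter> D. \<not> (c \<delta> \<inter> E \<subseteq> D))) \<subseteq> acc E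
      \<and> (\<forall>\<delta>\<in>S \<inter> (SOME D. club r D \<and> D \<subseteq> E \<and> D \<subseteq> acc E \<and> (\<forall>\<delta>\<in>S \<inter> D. \<not> (c \<delta> \<inter> E \<subseteq> D))).
           \<not> (c \<delta> \<inter> E \<subseteq> (SOME D. club r D \<and> D \<subseteq> E \<and> D \<subseteq> acc E \<and> (\<forall>\<delta>\<in>S \<inter> D. \<not> (c \<delta> \<inter> E \<subseteq> D)))))"
      by (rule someI[where P="\<lambda>D. club r D \<and> D \<subseteq> E \<and> D \<subseteq> acc E \<and> (\<forall>\<delta>\<in>S \<inter> D. \<not> (c \<delta> \<inter> E \<subseteq> D))"])
    thus "club r (G E) \<and> G E \<subseteq> E \<and> G E \<subseteq> acc E \<and> (\<forall>\<delta>\<in>S \<inter> G E. \<not> (c \<delta> \<inter> E \<subseteq> G E))"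
      unfolding G_def using E by simp
  qed
  have G2: "\<And>E. club r (G E) \<and> G E \<subseteq> E'"
  proof -
    fix E show "club r (G E) \<and> G E \<subseteq> E'"
    proof (cases "club r E \<and> E \<subseteq> E'")
      case True thus ?thesis using G1[of E] by blast
    next
      case False
      have "G E = E'" unfolding G_def using False by (rule if_not_P)
      thus ?thesis using E'_club by simp
    qed
  qed
  define s where "s = cardSuc k"
  have sC: "Card_order s" unfolding s_def by (rule cardSuc_Card_order[OF kap(1)])
  have sr: "s <o r" unfolding s_def by (rule succ)
  have swo: "wo_rel s" by (rule Card_order_wo_rel[OF sC])
  define R where "R = s - Id"
  have wfR: "wf R" unfolding R_def by (rule wo_rel.WF[OF swo])
  define Es where "Es = wfrec R (\<lambda>F i. \<Inter> (insert E' ((\<lambda>j. G (F j)) ` {j. (j,i) \<in> R})))"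
  have Es_eq: "\<And>i. Es i = \<Inter> (insert E' ((\<lambda>j. G (Es j)) ` {j. (j,i) \<in> R}))"
  proof -
    fix i
    have "Es i = \<Inter> (insert E' ((\<lambda>j. G (cut Es R i j)) ` {j. (j,i) \<in> R}))"
      unfolding Es_def by (subst wfrec[OF wfR]) simp
    also have "(\<lambda>j. G (cut Es R i j)) ` {j. (j,i) \<in> R} = (\<lambda>j. G (Es j)) ` {j. (j,i) \<in> R}"
      by (auto simp: cut_apply)
    finally show "Es i = \<Inter> (insert E' ((\<lambda>j. G (Es j)) ` {j. (j,i) \<in> R}))" .
  qed
  have RF: "\<And>i. {j. (j,i) \<in> R} \<subseteq> Field s" unfolding R_def by (auto intro: FieldI1)
  have Es_club: "\<And>i. club r (Es i) \<and> Es i \<subseteq> E'"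
  proof -
    fix i
    have "club r (\<Inter> (insert E' ((\<lambda>j. G (Es j)) ` {j. (j,i) \<in> R})))"
      using club_fam[OF sC sr RF, where H="\<lambda>j. G (Es j)"] G2 E'_club by blast
    thus "club r (Es i) \<and> Es i \<subseteq> E'" using Es_eq[of i] by auto
  qed
  define Estar where "Estar = \<Inter> (insert E' ((\<lambda>j. G (Es j)) ` Field s))"
  have "club r Estar" unfolding Estar_def
    using club_fam[OF sC sr subset_refl, where H="\<lambda>j. G (Es j)"] G2 E'_club by blast
  then obtain \<delta> where d: "\<delta> \<in> S" "\<delta> \<in> Estar" using S_stat unfolding stationary_def by blast
  define x where "x = (\<lambda>j. SOME y. y \<in> c \<delta> \<inter> Es j \<and> y \<notin> G (Es j))"
  have x: "\<And>j. j \<in> Field s \<Longrightarrow> x j \<in> c \<delta> \<inter> Es j \<and> x j \<notin> G (Es j)"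
  proof -
    fix j assume j: "j \<in> Field s"
    have dG: "\<delta> \<in> G (Es j)" using d(2) j unfolding Estar_def by blast
    have "\<not> (c \<delta> \<inter> Es j \<subseteq> G (Es j))" using G1[of "Es j"] Es_club[of j] d(1) dG by blast
    then obtain y where "y \<in> c \<delta> \<inter> Es j \<and> y \<notin> G (Es j)" by blast
    thus "x j \<in> c \<delta> \<inter> Es j \<and> x j \<notin> G (Es j)" unfolding x_def
      by (rule someI[where P="\<lambda>y. y \<in> c \<delta> \<inter> Es j \<and> y \<notin> G (Es j)"])
  qed
  have sub_lt: "\<And>i j. (j,i) \<in> R \<Longrightarrow> Es i \<subseteq> G (Es j)"
    using Es_eq by blast
  have inj: "inj_on x (Field s)"
  proof (rule inj_onI)
    fix i j assume i: "i \<in> Field s" and j: "j \<in> Field s" and eq: "x i = x j"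
    show "i = j"
    proof (rule ccontr)
      assume ne: "i \<noteq> j"
      have "(i,j) \<in> s \<or> (j,i) \<in> s" using wo_rel.TOTALS[OF swo] i j by blast
      thus False
      proof
        assume "(i,j) \<in> s"
        hence "(i,j) \<in> R" using ne unfolding R_def by blast
        hence "x j \<in> G (Es i)" using sub_lt x[OF j] by blast
        thus False using x[OF i] eq by simp
      next
        assume "(j,i) \<in> s"
        hence "(j,i) \<in> R" using ne unfolding R_def by blast
        hence "x i \<in> G (Es j)" using sub_lt x[OF i] by blast
        thus False using x[OF j] eq by simp
      qed
    qed
  qed
  have "x ` Field s \<subseteq> c \<delta>" using x by blast
  hence 1: "|Field s| \<le>o |c \<delta>|" using card_of_ordLeq inj by blast
  have W: "Well_order r" using WO unfolding wo_rel_def .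
  have 2: "|c \<delta>| \<le>o Restr r (c \<delta>)" by (rule card_of_least[OF well_order_on_Restr[OF W cF[OF d(1)]]])
  have 3: "Restr r (c \<delta>) =o k" using c_club d(1) unfolding otp_eq_def by blast
  have 4: "s =o |Field s|" using card_of_Field_ordIso[OF sC] ordIso_symmetric by blast
  have "s \<le>o k" using ordIso_ordLeq_trans[OF 4 ordLeq_ordIso_trans[OF ordLeq_transitive[OF 1 2] 3]] .
  moreover have "k <o s" unfolding s_def by (rule ks)
  ultimately show False using not_ordLess_ordLeq by blast
qed


end
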